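(* Let $p,q\in\mathbb{N}$ and let $T=(T_{i,j})_{i,j\in\mathbb{N}_0}$ be a semi-infinite complex matrix with band structure $T_{i,j}=0$ whenever $j<i-p$ or $j>i+q$. For $N\in\mathbb{N}_0$ let $T^{[N]}=(T_{i,j})_{0\le i,j\le N}$ be its principal truncation of size $N+1$. Let $\nu\in\mathbb{C}^{p\times p}$ and $\xi\in\mathbb{C}^{q\times q}$ be invertible lower triangular matrices. Fix $a\in\{1,\dots,p\}$ and $b\in\{1,\dots,q\}$, and define the semi-infinite column vector $u_a^\nu$ whose entries with indices $0,\dots,p-1$ are the entries of $\nu^{-\top}e_a^{[p]}$ and whose remaining entries are $0$, and the semi-infinite row vector $u_b^\xi$ whose entries with indices $0,\dots,q-1$ are the entries of $(e_b^{[q]})^\top\xi^{-1}$ and whose remaining entries are $0$ (here $e_a^{[p]}$, $e_b^{[q]}$ are standard basis vectors of $\mathbb{C}^p$, $\mathbb{C}^q$). Let $e_a^\nu\in\mathbb{C}^{N+1}$ and $e_b^\xi\in\mathbb{C}^{N+1}$ denote the vectors formed by the entries with indices $0,\dots,N$ of $u_a^\nu$ and of $(u_b^\xi)^\top$, respectively. Define \[ d_{b,a}(N)\coloneq\left\lceil\frac{N+2-a}{p}\right\rceil+\left\lceil\frac{N+2-b}{q}\right\rceil-1 . \] Then for every $n\in\mathbb{N}_0$ and every $N\in\mathbb{N}_0$ with $n\le d_{b,a}(N)$, \[ u_b^\xi\,T^n\,u_a^\nu=(e_b^\xi)^\top\bigl(T^{[N]}\bigr)^n e_a^\nu . \]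
   Context: Powers $T^n$ of the banded semi-infinite matrix are defined by ordinary matrix multiplication (all sums involved are finite because of the band structure), with $T^0=I$. Since $\nu$ is lower triangular, $\nu^{-\top}e_a^{[p]}$ is supported in indices $\{0,\dots,a-1\}$, and $(e_b^{[q]})^\top\xi^{-1}$ is supported in indices $\{0,\dots,b-1\}$, so $u_b^\xi T^n u_a^\nu$ is a finite sum. *)

theory Defs
  imports "HOL-Analysis.Infinite_Sum" "Jordan_Normal_Form.Matrix"
begin

type_synonym smat = "nat \<Rightarrow> nat \<Rightarrow> complex"

definition banded :: "nat \<Rightarrow> nat \<Rightarrow> smat \<Rightarrow> bool" where
  "banded p q T \<longleftrightarrow> (\<forall>i j. (j + p < i \<or> j > i + q) \<longrightarrow> T i j = 0)"

text \<open>Product of semi-infinite matrices: entry (i,j) is the sum over k of A i k * B k j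
  (a finite sum for banded matrices; written as an infinite sum).\<close>
definition smat_mult :: "smat \<Rightarrow> smat \<Rightarrow> smat" where
  "smat_mult A B = (\<lambda>i j. \<Sum>\<^sub>\<infinity>k. A i k * B k j)"

definition smat_id :: smat where
  "smat_id = (\<lambda>i j. if i = j then 1 else 0)"

fun smat_pow :: "smat \<Rightarrow> nat \<Rightarrow> smat" where
  "smat_pow T 0 = smat_id"
| "smat_pow T (Suc n) = smat_mult (smat_pow T n) T"

definition trunc :: "smat \<Rightarrow> nat \<Rightarrow> complex mat" where
  "trunc T N = mat (N+1) (N+1) (\<lambda>(i,j). T i j)"

definition lower_triangular_mat :: "'a::zero mat \<Rightarrow> bool" where
  "lower_triangular_mat A \<longleftrightarrow> (\<forall>i<dim_row A. \<forall>j<dim_col A. i < j \<longrightarrow> A $$ (i,j) = 0)"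

text \<open>u_a^nu: entries 0..p-1 are nu^{-T} e_a, i.e. entry i is (nu^{-1})_{a-1,i}
  (a in 1..p); zero elsewhere. Given the inverse nui of nu.\<close>
definition u_col :: "nat \<Rightarrow> complex mat \<Rightarrow> nat \<Rightarrow> nat \<Rightarrow> complex" where
  "u_col p nui a i = (if i < p then (transpose_mat nui *\<^sub>v unit_vec p (a - 1)) $ i else 0)"

definition u_row :: "nat \<Rightarrow> complex mat \<Rightarrow> nat \<Rightarrow> nat \<Rightarrow> complex" where
  "u_row q xii b i = (if i < q then (transpose_mat xii *\<^sub>v unit_vec q (b - 1)) $ i else 0)"

definition d_ba :: "nat \<Rightarrow> nat \<Rightarrow> nat \<Rightarrow> nat \<Rightarrow> nat \<Rightarrow> int" where
  "d_ba p q b a N = \<lceil>(real N + 2 - real a) / real p\<rceil> + \<lceil>(real N + 2 - real b) / real q\<rceil> - 1"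

end

theory Submission imports Defs "Jordan_Normal_Form.Determinant" begin

lemma inv_lower:
  fixes A B :: "complex mat"
  assumes A: "A \<in> carrier_mat n n" and B: "B \<in> carrier_mat n n" and AB: "A * B = 1\<^sub>m n"
    and L: "lower_triangular_mat A"
  shows "r < c \<Longrightarrow> c < n \<Longrightarrow> B $$ (r,c) = 0"
proof -
  have Lz: "\<And>i j. i < j \<Longrightarrow> j < n \<Longrightarrow> A $$ (i,j) = 0" using L A unfolding lower_triangular_mat_def by auto
  have "det A * det B = 1" using det_mult[OF A B] AB by simp
  then have "det A \<noteq> 0" by auto
  moreover have "det A = (\<Prod>i = 0..<n. A $$ (i,i))"
    using det_lower_triangular[OF Lz A] prod_list_diag_prod A by auto
  ultimately have diag: "\<And>i. i < n \<Longrightarrow> A $$ (i,i) \<noteq> 0" by auto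
  show "r < c \<Longrightarrow> c < n \<Longrightarrow> B $$ (r,c) = 0"
  proof (induction r rule: less_induct)
    case (less r)
    have "(A * B) $$ (r,c) = 0" using AB less.prems by simp
    also have "(A * B) $$ (r,c) = (\<Sum>k<n. A $$ (r,k) * B $$ (k,c))"
      using A B less.prems by (simp add: scalar_prod_def lessThan_atLeast0)
    also have "\<dots> = (\<Sum>k\<in>{r}. A $$ (r,k) * B $$ (k,c))"
    proof (rule sum.mono_neutral_right)
      show "\<forall>k\<in>{..<n} - {r}. A $$ (r, k) * B $$ (k, c) = 0"
      proof
        fix k assume k: "k \<in> {..<n} - {r}"
        show "A $$ (r, k) * B $$ (k, c) = 0"
        proof (cases "k < r")
          case True then show ?thesis using less k by auto
        next
          case False then show ?thesis using Lz k by auto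
        qed
      qed
    qed (use less.prems in auto)
    finally show ?case using diag less.prems by simp
  qed
qed


lemma u_entry:
  fixes M :: "complex mat"
  assumes "M \<in> carrier_mat p p" "i < p" "a \<in> {1..p}"
  shows "(transpose_mat M *\<^sub>v unit_vec p (a - 1)) $ i = M $$ (a - 1, i)"
  using assms by (auto simp: col_def)

lemma infsum_fin:
  fixes f :: "nat \<Rightarrow> complex"
  assumes "\<And>k. k \<notin> S \<Longrightarrow> f k = 0" "finite S"
  shows "infsum f UNIV = sum f S"
proof -
  have "infsum f UNIV = infsum f S"
    by (rule infsum_cong_neutral) (use assms in auto)
  then show ?thesis using assms by simp
qed

lemma pow_band:
  assumes B: "banded p q T"
  shows "k > i + n*q \<or> k + n*p < i \<Longrightarrow> smat_pow T n i k = 0"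
proof (induction n arbitrary: k)
  case 0
  then show ?case by (auto simp: smat_id_def)
next
  case (Suc n)
  have "smat_pow T (Suc n) i k = (\<Sum>\<^sub>\<infinity>m. smat_pow T n i m * T m k)"
    by (simp add: smat_mult_def)
  also have "\<dots> = 0"
  proof (rule infsum_0)
    fix m :: nat
    show "smat_pow T n i m * T m k = 0"
    proof (cases "m > i + n*q \<or> m + n*p < i")
      case True then show ?thesis using Suc.IH by simp
    next
      case False
      then have "k + p < m \<or> k > m + q" using Suc.prems by auto
      then show ?thesis using B unfolding banded_def by auto
    qed
  qed
  finally show ?case .
qed

lemma trunc_idx: "k \<le> N \<Longrightarrow> j \<le> N \<Longrightarrow> trunc T N $$ (k,j) = T k j"
  by (simp add: trunc_def)

lemma trunc_car: "trunc T N \<in> carrier_mat (N+1) (N+1)" by (simp add: trunc_def)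

lemma pow_step:
  assumes "i \<le> N" "j \<le> N"
  shows "(trunc T N ^\<^sub>m Suc n) $$ (i,j) = (\<Sum>k<N+1. (trunc T N ^\<^sub>m n) $$ (i,k) * T k j)"
proof -
  let ?A = "trunc T N"
  have d: "dim_row (?A ^\<^sub>m n) = N+1" "dim_col (?A ^\<^sub>m n) = N+1" "dim_row ?A = N+1" "dim_col ?A = N+1"
    using pow_carrier_mat[OF trunc_car] trunc_car by auto
  have "(?A ^\<^sub>m Suc n) $$ (i,j) = row (?A ^\<^sub>m n) i \<bullet> col ?A j"
    using assms d by simp
  also have "\<dots> = (\<Sum>k\<in>{0..<N+1}. (?A ^\<^sub>m n) $$ (i,k) * ?A $$ (k,j))"
    unfolding scalar_prod_def using assms d by (intro sum.cong) auto
  also have "\<dots> = (\<Sum>k<N+1. (?A ^\<^sub>m n) $$ (i,k) * T k j)"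
    by (intro sum.cong) (use assms trunc_idx in auto)
  finally show ?thesis .
qed

lemma key:
  assumes B: "banded p q T" and iN: "i \<le> N" and sq: "i + s*q \<le> N"
  shows "j \<le> N \<Longrightarrow> n \<le> s+t+1 \<Longrightarrow> j + t*p \<le> N \<Longrightarrow>
     (trunc T N ^\<^sub>m n) $$ (i,j) = smat_pow T n i j"
proof (induction n arbitrary: j t)
  case 0
  then show ?case using iN by (simp add: trunc_def smat_id_def)
next
  case (Suc n)
  have "(trunc T N ^\<^sub>m Suc n) $$ (i,j) = (\<Sum>k<N+1. (trunc T N ^\<^sub>m n) $$ (i,k) * T k j)"
    using pow_step iN Suc.prems by blast
  also have "\<dots> = (\<Sum>k<N+1. smat_pow T n i k * T k j)"
  proof (rule sum.cong)
    fix k assume k: "k \<in> {..<N+1}"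
    show "(trunc T N ^\<^sub>m n) $$ (i,k) * T k j = smat_pow T n i k * T k j"
    proof (cases "T k j = 0")
      case False
      then have kj: "k \<le> j + p" using B unfolding banded_def by (meson not_le)
      have "k + (t - 1) * p \<le> N"
      proof (cases t)
        case 0 then show ?thesis using k by simp
      next
        case (Suc t')
        then have "k + (t - 1) * p \<le> j + t * p" using kj by simp
        then show ?thesis using Suc.prems by linarith
      qed
      moreover have "n \<le> s + (t - 1) + 1" using Suc.prems by linarith
      moreover have "k \<le> N" using k by simp
      ultimately have "(trunc T N ^\<^sub>m n) $$ (i,k) = smat_pow T n i k" using Suc.IH by blast
      then show ?thesis by simp
    qed simp
  qed simp
  also have "\<dots> = smat_pow T (Suc n) i j"
  proof -
    have "smat_pow T (Suc n) i j = (\<Sum>\<^sub>\<infinity>k. smat_pow T n i k * T k j)"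
      by (simp add: smat_mult_def)
    also have "\<dots> = (\<Sum>k<N+1. smat_pow T n i k * T k j)"
    proof (rule infsum_fin)
      fix k assume "k \<notin> {..<N+1}"
      then have k: "k > N" by simp
      show "smat_pow T n i k * T k j = 0"
      proof (cases "t = 0")
        case True
        then have "n \<le> s" using Suc.prems by simp
        then have "n * q \<le> s * q" by simp
        then have "k > i + n*q" using k sq by linarith
        then show ?thesis using pow_band[OF B] by simp
      next
        case False
        then have "p \<le> t * p" by simp
        then have "j + p < k" using k Suc.prems by linarith
        then show ?thesis using B unfolding banded_def by simp
      qed
    qed simp
    finally show ?thesis by simp
  qed
  finally show ?case .
qed


lemma sum_same:
  fixes g :: "nat \<Rightarrow> complex"
  assumes "finite A" "finite B" "\<And>x. x \<in> A - B \<Longrightarrow> g x = 0" "\<And>x. x \<in> B - A \<Longrightarrow> g x = 0"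
  shows "sum g A = sum g B"
proof -
  have "sum g A = sum g (A \<union> B)" using sum.mono_neutral_left[of "A \<union> B" A g] assms by auto
  also have "\<dots> = sum g B"
  proof -
    have "\<forall>i\<in>A \<union> B - B. g i = 0" using assms by auto
    then show ?thesis using sum.mono_neutral_left[of "A \<union> B" B g] assms(1,2) by auto
  qed
  finally show ?thesis .
qed

theorem lemma1:
  fixes p q :: nat and T :: smat and \<nu> \<nu>i \<xi> \<xi>i :: "complex mat" and a b n N :: nat
  assumes "p \<ge> 1" and "q \<ge> 1"
    and "banded p q T"
    and "\<nu> \<in> carrier_mat p p" and "\<nu>i \<in> carrier_mat p p"
    and "inverts_mat \<nu> \<nu>i" and "inverts_mat \<nu>i \<nu>" and "lower_triangular_mat \<nu>"
    and "\<xi> \<in> carrier_mat q q" and "\<xi>i \<in> carrier_mat q q"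
    and "inverts_mat \<xi> \<xi>i" and "inverts_mat \<xi>i \<xi>" and "lower_triangular_mat \<xi>"
    and "a \<in> {1..p}" and "b \<in> {1..q}"
    and "int n \<le> d_ba p q b a N"
  shows "(\<Sum>i<q. \<Sum>j<p. u_row q \<xi>i b i * smat_pow T n i j * u_col p \<nu>i a j)
       = vec (N+1) (u_row q \<xi>i b) \<bullet> ((trunc T N ^\<^sub>m n) *\<^sub>v vec (N+1) (u_col p \<nu>i a))"
proof -
  note B = assms(3)
  define ur where "ur = u_row q \<xi>i b"
  define uc where "uc = u_col p \<nu>i a"
  define Q where "Q = trunc T N ^\<^sub>m n"
  define f where "f i j = ur i * smat_pow T n i j * uc j" for i j
  have Qc: "Q \<in> carrier_mat (N+1) (N+1)" unfolding Q_def using pow_carrier_mat[OF trunc_car] by blast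
  have nuL: "\<And>r c. r < c \<Longrightarrow> c < p \<Longrightarrow> \<nu>i $$ (r,c) = 0"
    using inv_lower[OF assms(4,5) _ assms(8)] assms(4,6) unfolding inverts_mat_def by auto
  have xiL: "\<And>r c. r < c \<Longrightarrow> c < q \<Longrightarrow> \<xi>i $$ (r,c) = 0"
    using inv_lower[OF assms(9,10) _ assms(13)] assms(9,11) unfolding inverts_mat_def by auto
  have ucz: "uc j = 0" if "j \<ge> a" for j
  proof (cases "j < p")
    case True
    then have "uc j = \<nu>i $$ (a - 1, j)" unfolding uc_def u_col_def using u_entry[OF assms(5) True assms(14)] by simp
    then show ?thesis using nuL[of "a - 1" j] True that assms(14) by auto
  qed (simp add: uc_def u_col_def)
  have urz: "ur i = 0" if "i \<ge> b" for i
  proof (cases "i < q")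
    case True
    then have "ur i = \<xi>i $$ (b - 1, i)" unfolding ur_def u_row_def using u_entry[OF assms(10) True assms(15)] by simp
    then show ?thesis using xiL[of "b - 1" i] True that assms(15) by auto
  qed (simp add: ur_def u_row_def)
  define c1 where "c1 = \<lceil>(real N + 2 - real a) / real p\<rceil>"
  define c2 where "c2 = \<lceil>(real N + 2 - real b) / real q\<rceil>"
  have nd: "int n \<le> c1 + c2 - 1" using assms(16) unfolding d_ba_def c1_def c2_def by simp
  have pp: "real p > 0" "real q > 0" using assms(1,2) by auto
  have h1: "k * int p < int N + 2 - int a" if "k < c1" for k
  proof -
    have "real_of_int k < (real N + 2 - real a) / real p" using that unfolding c1_def by (simp add: less_ceiling_iff)
    then have "real_of_int k * real p < real N + 2 - real a" using pp by (simp add: pos_less_divide_eq)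
    then have "real_of_int (k * int p) < real_of_int (int N + 2 - int a)" by simp
    then show ?thesis by (simp only: of_int_less_iff)
  qed
  have h2: "k * int q < int N + 2 - int b" if "k < c2" for k
  proof -
    have "real_of_int k < (real N + 2 - real b) / real q" using that unfolding c2_def by (simp add: less_ceiling_iff)
    then have "real_of_int k * real q < real N + 2 - real b" using pp by (simp add: pos_less_divide_eq)
    then have "real_of_int (k * int q) < real_of_int (int N + 2 - int b)" by simp
    then show ?thesis by (simp only: of_int_less_iff)
  qed
  have c1p: "c1 \<ge> 0"
  proof -
    have "real N + 2 - real a > - real p" using assms(14) by auto
    then have "-1 < (real N + 2 - real a) / real p" using pp by (simp add: pos_less_divide_eq)
    then have "-1 < c1" unfolding c1_def by (simp add: less_ceiling_iff)
    then show ?thesis by simp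
  qed
  have c2p: "c2 \<ge> 0"
  proof -
    have "real N + 2 - real b > - real q" using assms(15) by auto
    then have "-1 < (real N + 2 - real b) / real q" using pp by (simp add: pos_less_divide_eq)
    then have "-1 < c2" unfolding c2_def by (simp add: less_ceiling_iff)
    then show ?thesis by simp
  qed
  have c1z: "c1 \<le> 0" if "a \<ge> N + 2"
  proof -
    have "\<not> 0 < (real N + 2 - real a) / real p" using that pp by (simp add: divide_less_0_iff not_less divide_nonpos_pos)
    then have "\<not> 0 < c1" unfolding c1_def by (simp add: less_ceiling_iff)
    then show ?thesis by simp
  qed
  have c2z: "c2 \<le> 0" if "b \<ge> N + 2"
  proof -
    have "\<not> 0 < (real N + 2 - real b) / real q" using that pp by (simp add: divide_less_0_iff not_less divide_nonpos_pos)
    then have "\<not> 0 < c2" unfolding c2_def by (simp add: less_ceiling_iff)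
    then show ?thesis by simp
  qed
  have PZ: "smat_pow T n i j = 0" if "i < b" "j < a" "i > N \<or> j > N" for i j
  proof (cases "i > N")
    case True
    then have "c2 \<le> 0" using c2z that by simp
    then have "int n < c1" using nd by simp
    then have "int n * int p < int N + 2 - int a" by (rule h1)
    then have "int (n * p) < int N + 2 - int a" by simp
    then have "j + n * p < i" using True that by linarith
    then show ?thesis using pow_band[OF B] by blast
  next
    case False
    then have jN: "j > N" using that by simp
    then have "c1 \<le> 0" using c1z that by simp
    then have "int n < c2" using nd by simp
    then have "int n * int q < int N + 2 - int b" by (rule h2)
    then have "int (n * q) < int N + 2 - int b" by simp
    then have "i + n * q < j" using jN that by linarith
    then show ?thesis using pow_band[OF B] by blast
  qed
  have QE: "Q $$ (i,j) = smat_pow T n i j" if "i < b" "j < a" "i \<le> N" "j \<le> N" for i j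
  proof -
    define s where "s = nat (c2 - 1)"
    define t where "t = nat (c1 - 1)"
    have "i + s * q \<le> N"
    proof (cases "c2 \<ge> 1")
      case True
      then have "int s < c2" unfolding s_def by simp
      then have "int s * int q < int N + 2 - int b" by (rule h2)
      then have "int (s * q) < int N + 2 - int b" by simp
      then show ?thesis using that by linarith
    qed (simp add: s_def that)
    moreover have "j + t * p \<le> N"
    proof (cases "c1 \<ge> 1")
      case True
      then have "int t < c1" unfolding t_def by simp
      then have "int t * int p < int N + 2 - int a" by (rule h1)
      then have "int (t * p) < int N + 2 - int a" by simp
      then show ?thesis using that by linarith
    qed (simp add: t_def that)
    moreover have "n \<le> s + t + 1"
    proof -
      have "int s = max (c2 - 1) 0" "int t = max (c1 - 1) 0" unfolding s_def t_def by auto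
      then have "int n \<le> int (s + t + 1)" using nd c1p c2p by simp
      then show ?thesis by simp
    qed
    ultimately show ?thesis unfolding Q_def using key[OF B that(3)] that(4) by blast
  qed
  have RHS: "vec (N+1) ur \<bullet> (Q *\<^sub>v vec (N+1) uc) = (\<Sum>i<N+1. \<Sum>j<N+1. ur i * Q $$ (i,j) * uc j)"
  proof -
    have "vec (N+1) ur \<bullet> (Q *\<^sub>v vec (N+1) uc) = (\<Sum>i\<in>{0..<N+1}. ur i * (row Q i \<bullet> vec (N+1) uc))"
      unfolding scalar_prod_def[of "vec (N+1) ur"] using Qc by (intro sum.cong) auto
    also have "\<dots> = (\<Sum>i<N+1. \<Sum>j<N+1. ur i * Q $$ (i,j) * uc j)"
    proof (intro sum.cong)
      fix i assume i: "i \<in> {..<N+1}"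
      have "row Q i \<bullet> vec (N+1) uc = (\<Sum>j\<in>{0..<N+1}. Q $$ (i,j) * uc j)"
        unfolding scalar_prod_def using Qc i by (intro sum.cong) auto
      then show "ur i * (row Q i \<bullet> vec (N+1) uc) = (\<Sum>j<N+1. ur i * Q $$ (i,j) * uc j)"
        by (simp only: sum_distrib_left mult.assoc lessThan_atLeast0)
    qed (simp add: lessThan_atLeast0)
    finally show ?thesis .
  qed
  define F where "F i = (\<Sum>j<a. f i j)" for i
  have L: "(\<Sum>i<q. \<Sum>j<p. f i j) = (\<Sum>i<b. F i)"
  proof -
    have "(\<Sum>i<q. \<Sum>j<p. f i j) = (\<Sum>i<q. F i)"
      unfolding F_def by (intro sum.cong refl sum_same) (use assms(14) ucz in \<open>auto simp: f_def\<close>)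
    also have "\<dots> = (\<Sum>i<b. F i)"
      by (intro sum_same) (use assms(15) urz in \<open>auto simp: f_def F_def\<close>)
    finally show ?thesis .
  qed
  have R: "(\<Sum>i<N+1. \<Sum>j<N+1. ur i * Q $$ (i,j) * uc j) = (\<Sum>i<b. F i)"
  proof -
    have "(\<Sum>i<N+1. \<Sum>j<N+1. ur i * Q $$ (i,j) * uc j) = (\<Sum>i<N+1. F i)"
    proof (intro sum.cong refl)
      fix i assume i: "i \<in> {..<N+1}"
      show "(\<Sum>j<N+1. ur i * Q $$ (i,j) * uc j) = F i"
      proof (cases "i < b")
        case False then show ?thesis by (simp add: urz F_def f_def)
      next
        case True
        have "(\<Sum>j<N+1. ur i * Q $$ (i,j) * uc j) = (\<Sum>j<N+1. f i j)"
        proof (intro sum.cong refl)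
          fix j assume j: "j \<in> {..<N+1}"
          show "ur i * Q $$ (i,j) * uc j = f i j"
          proof (cases "j < a")
            case True2: True
            then show ?thesis using QE[of i j] True i j by (simp add: f_def)
          qed (simp add: ucz f_def)
        qed
        also have "\<dots> = F i" unfolding F_def
          by (intro sum_same) (use ucz PZ True in \<open>auto simp: f_def\<close>)
        finally show ?thesis .
      qed
    qed
    also have "\<dots> = (\<Sum>i<b. F i)"
      by (intro sum_same) (use urz PZ in \<open>auto simp: f_def F_def\<close>)
    finally show ?thesis .
  qed
  show ?thesis using L R RHS unfolding f_def ur_def uc_def Q_def by simp
qed

end
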